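(* Let $f:M\to M$ be a continuous map of a compact metric space and $\{\phi_n\}$ a sequence of continuous functions such that for some $L>0$, $|\phi_n(x)|/n\le L$ for $\nu$-a.e. $x$, all $n$, and all $\nu\in\mathcal M_f$. If $\{\phi_n\}$ is subadditive, then $\lim_{n\to\infty}P(\phi_n/n)$ exists and equals $\inf_{n>0}P(\phi_n/n)$. If $\{\phi_n\}$ is superadditive, then $\lim_{n\to\infty}P(\phi_n/n)$ exists and equals $\sup_{n>0}P(\phi_n/n)$.
   Context: $\mathcal M_f$ is the set of $f$-invariant Borel probability measures; $P(\phi)=\sup_{\nu\in\mathcal M_f}\{h(\nu)+\int\phi\,d\nu\}$ is the topological pressure of continuous $\phi$, $h$ the metric entropy. Subadditive (resp. superadditive): $\phi_{n+m}\le\phi_n+\phi_m\circ f^n$ (resp. $\ge$) for all $n,m$. *)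

theory Defs
  imports "HOL-Probability.Probability"
begin

definition invariant_measures :: "('a::metric_space \<Rightarrow> 'a) \<Rightarrow> 'a set \<Rightarrow> 'a measure set" where
  "invariant_measures f M = {\<nu>. prob_space \<nu> \<and> sets \<nu> = sets (restrict_space borel M) \<and>
      (\<forall>A\<in>sets \<nu>. measure \<nu> (f -` A \<inter> M) = measure \<nu> A)}"

definition finite_partition :: "'a measure \<Rightarrow> 'a set set \<Rightarrow> bool" where
  "finite_partition \<nu> P \<longleftrightarrow> finite P \<and> P \<subseteq> sets \<nu> \<and> \<Union>P = space \<nu> \<and>
      (\<forall>A\<in>P. \<forall>B\<in>P. A \<noteq> B \<longrightarrow> A \<inter> B = {})"

definition part_entropy :: "'a measure \<Rightarrow> 'a set set \<Rightarrow> real" where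
  "part_entropy \<nu> P = - (\<Sum>A\<in>P. if measure \<nu> A = 0 then 0 else measure \<nu> A * ln (measure \<nu> A))"

text \<open>The join  P \<or> f^{-1}P \<or> ... \<or> f^{-(n-1)}P.\<close>
definition join_iter :: "('a \<Rightarrow> 'a) \<Rightarrow> 'a set \<Rightarrow> 'a set set \<Rightarrow> nat \<Rightarrow> 'a set set" where
  "join_iter f M P n = (\<lambda>A. M \<inter> (\<Inter>i<n. (f ^^ i) -` A i)) ` (Pi\<^sub>E {..<n} (\<lambda>_. P))"

definition entropy_wrt :: "'a measure \<Rightarrow> ('a \<Rightarrow> 'a) \<Rightarrow> 'a set set \<Rightarrow> real" where
  "entropy_wrt \<nu> f P =
     lim (\<lambda>n. part_entropy \<nu> (join_iter f (space \<nu>) P (Suc n)) / real (Suc n))"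

definition ks_entropy :: "'a measure \<Rightarrow> ('a \<Rightarrow> 'a) \<Rightarrow> ereal" where
  "ks_entropy \<nu> f = (SUP P \<in> {P. finite_partition \<nu> P}. ereal (entropy_wrt \<nu> f P))"

text \<open>Topological pressure via the variational principle, as in the paper.\<close>
definition pressure :: "('a::metric_space \<Rightarrow> 'a) \<Rightarrow> 'a set \<Rightarrow> ('a \<Rightarrow> real) \<Rightarrow> ereal" where
  "pressure f M \<phi> = (SUP \<nu> \<in> invariant_measures f M. ks_entropy \<nu> f + ereal (integral\<^sup>L \<nu> \<phi>))"

end

theory Submission imports Defs begin

lemma sub_bound:
  fixes a :: "nat \<Rightarrow> real" and L :: real
  assumes sub: "\<And>n m. n \<ge> 1 \<Longrightarrow> m \<ge> 1 \<Longrightarrow> a (n+m) \<le> a n + a m"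
    and bnd: "\<And>n. n \<ge> 1 \<Longrightarrow> \<bar>a n\<bar> \<le> real n * L"
    and L: "L \<ge> 0" and k: "k \<ge> 1" and n: "n \<ge> 1"
  shows "a n / real n \<le> a k / real k + 2 * real k * L / real n"
proof -
  define q where "q = n div k"
  define r where "r = n mod k"
  have nqr: "n = q * k + r" by (simp add: q_def r_def)
  have rk: "r < k" using k by (simp add: r_def)
  have mult: "a (q' * k) \<le> real q' * a k" if "q' \<ge> 1" for q'
    using that
  proof (induction q' rule: dec_induct)
    case base then show ?case by simp
  next
    case (step q')
    have "a (Suc q' * k) = a (q' * k + k)" by (simp add: add.commute)
    also have "\<dots> \<le> a (q'*k) + a k" using sub[of "q'*k" k] step k by (simp add: Suc_le_eq)
    also have "\<dots> \<le> real (Suc q') * a k" using step by (simp add: algebra_simps)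
    finally show ?case .
  qed
  have main: "a n \<le> real q * a k + real r * L"
  proof (cases "q = 0")
    case True
    then have "n = r" using nqr by simp
    then show ?thesis using bnd[OF n] True by simp
  next
    case False
    show ?thesis
    proof (cases "r = 0")
      case True
      then show ?thesis using mult[of q] False nqr L by simp
    next
      case False2: False
      have "a n \<le> a (q*k) + a r" using sub[of "q*k" r] nqr False False2 k
        by (simp add: Suc_le_eq)
      also have "\<dots> \<le> real q * a k + real r * L"
        using mult[of q] bnd[of r] False False2 by simp
      finally show ?thesis .
    qed
  qed
  have akL: "a k \<ge> - real k * L" using bnd[OF k] by simp
  have "real r * a k \<ge> - real r * real k * L" using akL
    using mult_left_mono[OF akL, of "real r"] by (simp add: algebra_simps)
  then have rak: "real r * a k / real k \<ge> - real r * L" using k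
    by (simp add: field_simps)
  have rL: "real r * L \<le> real k * L" using rk L by (simp add: mult_right_mono)
  have nreal: "real n = real q * real k + real r" using nqr by simp
  have "a n \<le> real n * (a k / real k) + 2 * real k * L"
  proof -
    have "real n * (a k / real k) = real q * a k + real r * a k / real k"
      using k by (simp add: nreal field_simps)
    then show ?thesis using main rak rL by linarith
  qed
  then show ?thesis using n by (simp add: field_simps)
qed


lemma inv_facts:
  fixes f :: "'a::metric_space \<Rightarrow> 'a"
  assumes nu: "\<nu> \<in> invariant_measures f M" and fc: "continuous_on M f" and fM: "f ` M \<subseteq> M"
  shows "prob_space \<nu>" and "space \<nu> = M" and "sets \<nu> = sets (restrict_space borel M)"
    and "\<And>n. (f ^^ n) \<in> measurable \<nu> \<nu>" and "\<And>n. distr \<nu> \<nu> (f ^^ n) = \<nu>"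
proof -
  show ps: "prob_space \<nu>" and ss: "sets \<nu> = sets (restrict_space borel M)"
    using nu by (auto simp: invariant_measures_def)
  have inv: "\<And>A. A \<in> sets \<nu> \<Longrightarrow> measure \<nu> (f -` A \<inter> M) = measure \<nu> A"
    using nu by (auto simp: invariant_measures_def)
  show sp: "space \<nu> = M" using sets_eq_imp_space_eq[OF ss] by (simp add: space_restrict_space)
  have fm: "f \<in> measurable \<nu> \<nu>"
  proof -
    have "f \<in> measurable (restrict_space borel M) (restrict_space borel M)"
      by (rule measurable_restrict_space2) (use fM borel_measurable_continuous_on_restrict[OF fc] in \<open>auto simp: space_restrict_space\<close>)
    then show ?thesis using measurable_cong_sets[OF ss ss] by simp
  qed
  show fnm: "(f ^^ n) \<in> measurable \<nu> \<nu>" for n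
  proof (induction n)
    case 0 then show ?case by (simp add: id_def)
  next
    case (Suc n)
    have "(f ^^ Suc n) = (f ^^ n) \<circ> f" by (rule funpow_Suc_right)
    then show ?case using measurable_comp[OF fm Suc] by (simp only:)
  qed
  interpret prob_space \<nu> by (rule ps)
  have einv: "emeasure \<nu> (f -` A \<inter> M) = emeasure \<nu> A" if "A \<in> sets \<nu>" for A
    using inv[OF that] by (simp add: emeasure_eq_measure)
  have eiter: "emeasure \<nu> ((f ^^ n) -` A \<inter> M) = emeasure \<nu> A" if A: "A \<in> sets \<nu>" for A n
  proof (induction n)
    case 0 then show ?case using sets.sets_into_space[OF A] sp by (simp add: Int_absorb2)
  next
    case (Suc n)
    have "(f ^^ Suc n) -` A \<inter> M = f -` ((f ^^ n) -` A \<inter> M) \<inter> M"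
      using fM by (auto simp: funpow_swap1)
    moreover have "(f ^^ n) -` A \<inter> M \<in> sets \<nu>"
      using measurable_sets[OF fnm A] sp by simp
    ultimately show ?case using einv[of "(f ^^ n) -` A \<inter> M"] Suc by (simp only:)
  qed
  show "distr \<nu> \<nu> (f ^^ n) = \<nu>" for n
    by (rule measure_eqI) (auto simp: emeasure_distr[OF fnm] sp eiter)
qed


lemma int_facts:
  fixes f :: "'a::metric_space \<Rightarrow> 'a" and \<phi> :: "nat \<Rightarrow> 'a \<Rightarrow> real"
  assumes nu: "\<nu> \<in> invariant_measures f M" and fc: "continuous_on M f" and fM: "f ` M \<subseteq> M"
    and cont: "continuous_on M (\<phi> n)" and n: "n \<ge> 1"
    and ae: "AE x in \<nu>. \<bar>\<phi> n x\<bar> / real n \<le> L"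
  shows "integrable \<nu> (\<phi> n)" and "\<bar>integral\<^sup>L \<nu> (\<phi> n)\<bar> \<le> real n * L"
    and "\<And>k. integrable \<nu> (\<lambda>x. \<phi> n ((f ^^ k) x))"
    and "\<And>k. integral\<^sup>L \<nu> (\<lambda>x. \<phi> n ((f ^^ k) x)) = integral\<^sup>L \<nu> (\<phi> n)"
proof -
  note F = inv_facts[OF nu fc fM]
  interpret prob_space \<nu> by (rule F(1))
  have meas: "\<phi> n \<in> borel_measurable \<nu>"
    using borel_measurable_continuous_on_restrict[OF cont] measurable_cong_sets[OF F(3), of "borel :: real measure" "borel :: real measure"] by simp
  have ae2: "AE x in \<nu>. \<bar>\<phi> n x\<bar> \<le> real n * L"
    using ae
  proof (rule AE_mp, intro AE_I2 impI)
    fix x assume "\<bar>\<phi> n x\<bar> / real n \<le> L"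
    then show "\<bar>\<phi> n x\<bar> \<le> real n * L" using n by (simp add: field_simps)
  qed
  show int: "integrable \<nu> (\<phi> n)"
    by (rule integrable_const_bound[where B="real n * L"]) (use ae2 meas in auto)
  have ae3: "AE x in \<nu>. \<phi> n x \<le> real n * L" "AE x in \<nu>. - (real n * L) \<le> \<phi> n x"
    using ae2 by auto
  have "integral\<^sup>L \<nu> (\<phi> n) \<le> integral\<^sup>L \<nu> (\<lambda>x. real n * L)"
    by (rule integral_mono_AE[OF int _ ae3(1)]) simp
  moreover have "integral\<^sup>L \<nu> (\<lambda>x. - (real n * L)) \<le> integral\<^sup>L \<nu> (\<phi> n)"
    by (rule integral_mono_AE[OF _ int ae3(2)]) simp
  ultimately show "\<bar>integral\<^sup>L \<nu> (\<phi> n)\<bar> \<le> real n * L"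
    by (simp add: prob_space)
  fix k
  show "integrable \<nu> (\<lambda>x. \<phi> n ((f ^^ k) x))"
    using integrable_distr_eq[OF F(4) meas, of k] F(5)[of k] int by simp
  show "integral\<^sup>L \<nu> (\<lambda>x. \<phi> n ((f ^^ k) x)) = integral\<^sup>L \<nu> (\<phi> n)"
    using integral_distr[OF F(4) meas, of k] F(5)[of k] by simp
qed



theorem lemma6p1:
  fixes f :: "'a::metric_space \<Rightarrow> 'a" and M :: "'a set"
    and \<phi> :: "nat \<Rightarrow> 'a \<Rightarrow> real" and L :: real
  assumes "compact M" and "continuous_on M f" and "f ` M \<subseteq> M"
    and "\<And>n. n \<ge> 1 \<Longrightarrow> continuous_on M (\<phi> n)"
    and "L > 0"
    and "\<And>\<nu> n. \<nu> \<in> invariant_measures f M \<Longrightarrow> n \<ge> 1 \<Longrightarrow>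
           AE x in \<nu>. \<bar>\<phi> n x\<bar> / real n \<le> L"
  shows "((\<forall>n m x. n \<ge> 1 \<longrightarrow> m \<ge> 1 \<longrightarrow> x \<in> M \<longrightarrow>
              \<phi> (n + m) x \<le> \<phi> n x + \<phi> m ((f ^^ n) x)) \<longrightarrow>
            ((\<lambda>n. pressure f M (\<lambda>x. \<phi> n x / real n))
               \<longlonglongrightarrow> (INF n\<in>{1..}. pressure f M (\<lambda>x. \<phi> n x / real n))))
       \<and> ((\<forall>n m x. n \<ge> 1 \<longrightarrow> m \<ge> 1 \<longrightarrow> x \<in> M \<longrightarrow>
              \<phi> (n + m) x \<ge> \<phi> n x + \<phi> m ((f ^^ n) x)) \<longrightarrow>
            ((\<lambda>n. pressure f M (\<lambda>x. \<phi> n x / real n))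
               \<longlonglongrightarrow> (SUP n\<in>{1..}. pressure f M (\<lambda>x. \<phi> n x / real n))))"
  proof -
  note a = assms
  define IM where "IM = invariant_measures f M"
  define A where "A = (\<lambda>\<nu> n. integral\<^sup>L \<nu> (\<phi> n))"
  define h where "h = (\<lambda>\<nu>. ks_entropy \<nu> f)"
  define P where "P = (\<lambda>n. pressure f M (\<lambda>x. \<phi> n x / real n))"
  have Peq: "P n = (SUP \<nu>\<in>IM. h \<nu> + ereal (A \<nu> n / real n))" for n
    by (simp add: P_def pressure_def IM_def h_def A_def)
  note IF = int_facts[OF _ a(2) a(3) a(4) _ a(6)]
  have bndA: "\<bar>A \<nu> n\<bar> \<le> real n * L" if "\<nu> \<in> IM" "n \<ge> 1" for \<nu> n
    using IF(2)[where \<nu>=\<nu> and n=n] that by (simp add: A_def IM_def)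
  have L0: "L \<ge> 0" using a(5) by simp
  have lim0: "(\<lambda>n. ereal (p + c / real n)) \<longlonglongrightarrow> ereal p" for p c :: real
  proof -
    have "(\<lambda>n. p + c / real n) \<longlonglongrightarrow> p + 0"
      by (intro tendsto_intros)
    then show ?thesis by (simp add: tendsto_ereal)
  qed
  have ev1: "eventually (\<lambda>n. n \<ge> (1::nat)) sequentially"
    by (rule eventually_ge_at_top)
  show ?thesis
  proof (intro conjI impI)
    assume S: "\<forall>n m x. n \<ge> 1 \<longrightarrow> m \<ge> 1 \<longrightarrow> x \<in> M \<longrightarrow>
              \<phi> (n + m) x \<le> \<phi> n x + \<phi> m ((f ^^ n) x)"
    have subA: "A \<nu> (n+m) \<le> A \<nu> n + A \<nu> m" if "\<nu> \<in> IM" "n \<ge> 1" "m \<ge> 1" for \<nu> n m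
    proof -
      have sp: "space \<nu> = M" using inv_facts(2)[OF _ a(2) a(3)] that(1) by (simp add: IM_def)
      have nm: "n + m \<ge> 1" using that by simp
      have "A \<nu> (n+m) \<le> integral\<^sup>L \<nu> (\<lambda>x. \<phi> n x + \<phi> m ((f ^^ n) x))"
        unfolding A_def
        by (rule integral_mono) (use IF(1)[where \<nu>=\<nu> and n="n+m"] IF(1)[where \<nu>=\<nu> and n=n] IF(3)[where \<nu>=\<nu> and n=m and k=n] that nm S sp
            in \<open>auto simp: IM_def\<close>)
      also have "\<dots> = A \<nu> n + A \<nu> m"
        using IF(1)[where \<nu>=\<nu> and n=n] IF(3)[where \<nu>=\<nu> and n=m and k=n] IF(4)[where \<nu>=\<nu> and n=m and k=n] that by (simp add: A_def IM_def)
      finally show ?thesis .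
    qed
    have key: "A \<nu> n / real n \<le> A \<nu> k / real k + 2 * real k * L / real n"
      if "\<nu> \<in> IM" "n \<ge> 1" "k \<ge> 1" for \<nu> n k
      by (rule sub_bound[OF subA bndA L0]) (use that in auto)
    have Pk: "P n \<le> P k + ereal (2 * real k * L / real n)" if "n \<ge> 1" "k \<ge> 1" for n k
      unfolding Peq[of n]
    proof (rule SUP_least)
      fix \<nu> assume nu: "\<nu> \<in> IM"
      have "h \<nu> + ereal (A \<nu> n / real n) \<le> h \<nu> + (ereal (A \<nu> k / real k) + ereal (2 * real k * L / real n))"
        using key[OF nu that] by (intro add_left_mono) simp
      also have "\<dots> = (h \<nu> + ereal (A \<nu> k / real k)) + ereal (2 * real k * L / real n)"
        by (simp add: add.assoc)
      also have "\<dots> \<le> P k + ereal (2 * real k * L / real n)"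
        unfolding Peq[of k] by (intro add_right_mono SUP_upper nu)
      finally show "h \<nu> + ereal (A \<nu> n / real n) \<le> P k + ereal (2 * real k * L / real n)" .
    qed
    have T: "P \<longlonglongrightarrow> (INF n\<in>{1..}. P n)"
    proof (rule order_tendstoI)
      fix y assume "y < (INF n\<in>{1..}. P n)"
      then have H1: "y < P n" if "n \<ge> 1" for n
        using INF_lower[of n "{1..}" P] that by (simp add: order_less_le_trans)
      show "eventually (\<lambda>n. y < P n) sequentially"
        by (rule eventually_mono[OF ev1]) (rule H1)
    next
      fix y assume "(INF n\<in>{1..}. P n) < y"
      then obtain k where k: "k \<ge> 1" "P k < y" by (auto simp: INF_less_iff)
      then obtain p where p: "P k < ereal p" "ereal p < y" using ereal_dense2 by blast
      have "eventually (\<lambda>n. ereal (p + 2 * real k * L / real n) < y) sequentially"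
        by (rule order_tendstoD(2)[OF lim0 p(2)])
      then show "eventually (\<lambda>n. P n < y) sequentially"
        using ev1
      proof eventually_elim
        case (elim n)
        have "P n \<le> P k + ereal (2 * real k * L / real n)" using Pk[OF elim(2) k(1)] .
        also have "\<dots> \<le> ereal p + ereal (2 * real k * L / real n)"
          using p(1) by (intro add_right_mono) simp
        also have "\<dots> = ereal (p + 2 * real k * L / real n)" by simp
        finally show ?case using elim(1) by simp
      qed
    qed
    then show "(\<lambda>n. pressure f M (\<lambda>x. \<phi> n x / real n)) \<longlonglongrightarrow> (INF n\<in>{1..}. pressure f M (\<lambda>x. \<phi> n x / real n))"
      unfolding P_def .
  next
    assume S: "\<forall>n m x. n \<ge> 1 \<longrightarrow> m \<ge> 1 \<longrightarrow> x \<in> M \<longrightarrow>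
              \<phi> (n + m) x \<ge> \<phi> n x + \<phi> m ((f ^^ n) x)"
    have supA: "- A \<nu> (n+m) \<le> - A \<nu> n + - A \<nu> m" if "\<nu> \<in> IM" "n \<ge> 1" "m \<ge> 1" for \<nu> n m
    proof -
      have sp: "space \<nu> = M" using inv_facts(2)[OF _ a(2) a(3)] that(1) by (simp add: IM_def)
      have nm: "n + m \<ge> 1" using that by simp
      have "integral\<^sup>L \<nu> (\<lambda>x. \<phi> n x + \<phi> m ((f ^^ n) x)) \<le> A \<nu> (n+m)"
        unfolding A_def
        by (rule integral_mono) (use IF(1)[where \<nu>=\<nu> and n="n+m"] IF(1)[where \<nu>=\<nu> and n=n] IF(3)[where \<nu>=\<nu> and n=m and k=n] that nm S sp
            in \<open>auto simp: IM_def\<close>)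
      moreover have "integral\<^sup>L \<nu> (\<lambda>x. \<phi> n x + \<phi> m ((f ^^ n) x)) = A \<nu> n + A \<nu> m"
        using IF(1)[where \<nu>=\<nu> and n=n] IF(3)[where \<nu>=\<nu> and n=m and k=n] IF(4)[where \<nu>=\<nu> and n=m and k=n] that by (simp add: A_def IM_def)
      ultimately show ?thesis by simp
    qed
    have key: "A \<nu> n / real n \<ge> A \<nu> k / real k - 2 * real k * L / real n"
      if "\<nu> \<in> IM" "n \<ge> 1" "k \<ge> 1" for \<nu> n k
    proof -
      have "(- A \<nu> n) / real n \<le> (- A \<nu> k) / real k + 2 * real k * L / real n"
        by (rule sub_bound[where a="\<lambda>n. - A \<nu> n", OF supA]) (use that bndA L0 in auto)
      then show ?thesis by simp
    qed
    have T: "P \<longlonglongrightarrow> (SUP n\<in>{1..}. P n)"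
    proof (rule order_tendstoI)
      fix y assume "(SUP n\<in>{1..}. P n) < y"
      then have H2: "P n < y" if "n \<ge> 1" for n
        using SUP_upper[of n "{1..}" P] that by (simp add: order_le_less_trans)
      show "eventually (\<lambda>n. P n < y) sequentially"
        by (rule eventually_mono[OF ev1]) (rule H2)
    next
      fix y assume "y < (SUP n\<in>{1..}. P n)"
      then obtain k where k: "k \<ge> 1" "y < P k" by (auto simp: less_SUP_iff)
      then obtain \<nu> where nu: "\<nu> \<in> IM" "y < h \<nu> + ereal (A \<nu> k / real k)"
        by (auto simp: Peq less_SUP_iff)
      then obtain p where p: "y < ereal p" "ereal p < h \<nu> + ereal (A \<nu> k / real k)"
        using ereal_dense2 by blast
      have "eventually (\<lambda>n. y < ereal (p + (- 2 * real k * L) / real n)) sequentially"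
        by (rule order_tendstoD(1)[OF lim0 p(1)])
      then show "eventually (\<lambda>n. y < P n) sequentially"
        using ev1
      proof eventually_elim
        case (elim n)
        have "ereal (p + (- 2 * real k * L) / real n) = ereal p + ereal (- (2 * real k * L / real n))"
          by simp
        also have "\<dots> \<le> (h \<nu> + ereal (A \<nu> k / real k)) + ereal (- (2 * real k * L / real n))"
          using p(2) by (intro add_right_mono) simp
        also have "\<dots> = h \<nu> + (ereal (A \<nu> k / real k) + ereal (- (2 * real k * L / real n)))"
          by (simp add: add.assoc)
        also have "\<dots> \<le> h \<nu> + ereal (A \<nu> n / real n)"
          using key[OF nu(1) elim(2) k(1)] by (intro add_left_mono) simp
        also have "\<dots> \<le> P n"
          unfolding Peq[of n] by (intro SUP_upper nu(1))
        finally show ?case using elim(1) by simp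
      qed
    qed
    then show "(\<lambda>n. pressure f M (\<lambda>x. \<phi> n x / real n)) \<longlonglongrightarrow> (SUP n\<in>{1..}. pressure f M (\<lambda>x. \<phi> n x / real n))"
      unfolding P_def .
  qed
qed

end
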